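(* Let $\mathcal{D}$ be a DAG on vertex set $[p]$, let $\mathcal{V} \subseteq [p]$, and let $k \in \mathcal{V}$. Then the fill edge set of $k$ over $\mathcal{V}$ consists exactly of the pairs of neighbors of $k$ in $\mathcal{M}_{\mathcal{V}}(\mathcal{D})$ that are not adjacent to each other in $\mathcal{M}_{\mathcal{V}}(\mathcal{D})$: \[ \mathcal{F}_{\mathcal{D}}(\mathcal{V}, k) = \{\, i - j \;:\; i \neq j,\ i, j \in \mathrm{nbr}_{\mathcal{M}_{\mathcal{V}}(\mathcal{D})}(k),\ i \not\sim_{\mathcal{M}_{\mathcal{V}}(\mathcal{D})} j \,\}. \]
   Context: For a DAG $\mathcal{D}$ on $[p]$ and $i, j \in [p]$, $S \subseteq [p]\setminus\{i,j\}$, write $i \perp\!\!\!\perp_{\mathcal{D}} j \mid S$ if $i$ and $j$ are d-separated given $S$ in $\mathcal{D}$, and $i \not\perp\!\!\!\perp_{\mathcal{D}} j \mid S$ if they are d-connected. For $\mathcal{V} \subseteq [p]$, the moral subgraph $\mathcal{M}_{\mathcal{V}}(\mathcal{D})$ is the undirected graph with vertex set $\mathcal{V}$ and edge set $\{ i - j : i \neq j \in \mathcal{V},\ i \not\perp\!\!\!\perp_{\mathcal{D}} j \mid \mathcal{V}\setminus\{i,j\}\}$. For an undirected graph $\mathcal{G}$ and vertex set $W$, $\mathcal{G}[W]$ is the induced subgraph on $W$; $\mathrm{nbr}_{\mathcal{G}}(k)$ is the set of neighbors of $k$ in $\mathcal{G}$, and $i \sim_{\mathcal{G}} j$ means $i,j$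 are adjacent in $\mathcal{G}$. Write $\mathcal{V}\setminus k := \mathcal{V}\setminus\{k\}$. The fill edge set of $k$ over $\mathcal{V}$ is the set of edges $\mathcal{F}_{\mathcal{D}}(\mathcal{V}, k) = \mathcal{M}_{\mathcal{V}\setminus k}(\mathcal{D}) \setminus \mathcal{M}_{\mathcal{V}}(\mathcal{D})[\mathcal{V}\setminus k]$ (edges present in the moral subgraph on $\mathcal{V}\setminus k$ but absent from the induced subgraph of $\mathcal{M}_{\mathcal{V}}(\mathcal{D})$ on $\mathcal{V}\setminus k$). *)

theory Defs
  imports Main
begin

text \<open>A directed graph on the vertex set [p] = {1..p} is given by its edge relation
  E, where E a b means there is a directed edge a -> b.\<close>

definition dag :: "nat \<Rightarrow> (nat \<Rightarrow> nat \<Rightarrow> bool) \<Rightarrow> bool" where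
  "dag p E \<longleftrightarrow> (\<forall>a b. E a b \<longrightarrow> a \<in> {1..p} \<and> b \<in> {1..p}) \<and> (\<forall>a. \<not> E\<^sup>+\<^sup>+ a a)"

definition adj :: "(nat \<Rightarrow> nat \<Rightarrow> bool) \<Rightarrow> nat \<Rightarrow> nat \<Rightarrow> bool" where
  "adj E a b \<longleftrightarrow> E a b \<or> E b a"

definition is_path :: "(nat \<Rightarrow> nat \<Rightarrow> bool) \<Rightarrow> nat list \<Rightarrow> bool" where
  "is_path E \<pi> \<longleftrightarrow> \<pi> \<noteq> [] \<and> distinct \<pi> \<and> (\<forall>m. Suc m < length \<pi> \<longrightarrow> adj E (\<pi>!m) (\<pi>!Suc m))"

definition collider :: "(nat \<Rightarrow> nat \<Rightarrow> bool) \<Rightarrow> nat list \<Rightarrow> nat \<Rightarrow> bool" where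
  "collider E \<pi> m \<longleftrightarrow> E (\<pi>!(m - 1)) (\<pi>!m) \<and> E (\<pi>!(Suc m)) (\<pi>!m)"

definition d_connecting :: "(nat \<Rightarrow> nat \<Rightarrow> bool) \<Rightarrow> nat set \<Rightarrow> nat list \<Rightarrow> bool" where
  "d_connecting E S \<pi> \<longleftrightarrow>
     (\<forall>m. 0 < m \<and> Suc m < length \<pi> \<longrightarrow>
        (collider E \<pi> m \<longrightarrow> (\<exists>s\<in>S. E\<^sup>*\<^sup>* (\<pi>!m) s)) \<and>
        (\<not> collider E \<pi> m \<longrightarrow> \<pi>!m \<notin> S))"

definition d_connected :: "(nat \<Rightarrow> nat \<Rightarrow> bool) \<Rightarrow> nat \<Rightarrow> nat \<Rightarrow> nat set \<Rightarrow> bool" where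
  "d_connected E i j S \<longleftrightarrow>
     (\<exists>\<pi>. is_path E \<pi> \<and> hd \<pi> = i \<and> last \<pi> = j \<and> d_connecting E S \<pi>)"

definition d_separated :: "(nat \<Rightarrow> nat \<Rightarrow> bool) \<Rightarrow> nat \<Rightarrow> nat \<Rightarrow> nat set \<Rightarrow> bool" where
  "d_separated E i j S \<longleftrightarrow> \<not> d_connected E i j S"

text \<open>Undirected graphs on a vertex set are represented by their edge sets,
  an edge i - j being the two-element set {i,j}.\<close>

definition moral_subgraph :: "(nat \<Rightarrow> nat \<Rightarrow> bool) \<Rightarrow> nat set \<Rightarrow> nat set set" where
  "moral_subgraph E V =
     {{i, j} | i j. i \<noteq> j \<and> i \<in> V \<and> j \<in> V \<and> \<not> d_separated E i j (V - {i, j})}"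

definition induced :: "nat set set \<Rightarrow> nat set \<Rightarrow> nat set set" where
  "induced G W = {e \<in> G. e \<subseteq> W}"

definition nbr :: "nat set set \<Rightarrow> nat \<Rightarrow> nat set" where
  "nbr G k = {i. i \<noteq> k \<and> {i, k} \<in> G}"

definition uadj :: "nat set set \<Rightarrow> nat \<Rightarrow> nat \<Rightarrow> bool" where
  "uadj G i j \<longleftrightarrow> {i, j} \<in> G"

definition fill_edges :: "(nat \<Rightarrow> nat \<Rightarrow> bool) \<Rightarrow> nat set \<Rightarrow> nat \<Rightarrow> nat set set" where
  "fill_edges E V k = moral_subgraph E (V - {k}) - induced (moral_subgraph E V) (V - {k})"

end

theory Submission
  imports Defs
begin

definition ok3 :: "(nat \<Rightarrow> nat \<Rightarrow> bool) \<Rightarrow> nat set \<Rightarrow> nat \<Rightarrow> nat \<Rightarrow> nat \<Rightarrow> bool" where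
  "ok3 E S a b c \<longleftrightarrow> (E a b \<and> E c b \<longrightarrow> (\<exists>s\<in>S. E\<^sup>*\<^sup>* b s)) \<and> (\<not> (E a b \<and> E c b) \<longrightarrow> b \<notin> S)"

fun adjs :: "(nat \<Rightarrow> nat \<Rightarrow> bool) \<Rightarrow> nat list \<Rightarrow> bool" where
  "adjs E (a#b#r) = (adj E a b \<and> adjs E (b#r))" | "adjs E _ = True"

fun oks :: "(nat \<Rightarrow> nat \<Rightarrow> bool) \<Rightarrow> nat set \<Rightarrow> nat list \<Rightarrow> bool" where
  "oks E S (a#b#c#r) = (ok3 E S a b c \<and> oks E S (b#c#r))" | "oks E S _ = True"

lemma adjs_iff: "adjs E w \<longleftrightarrow> (\<forall>m. Suc m < length w \<longrightarrow> adj E (w!m) (w!Suc m))"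
proof (induction E w rule: adjs.induct)
  case (1 E a b r)
  show ?case
  proof
    assume "adjs E (a#b#r)" then show "\<forall>m. Suc m < length (a#b#r) \<longrightarrow> adj E ((a#b#r)!m) ((a#b#r)!Suc m)"
      using 1 by (auto simp: less_Suc_eq_0_disj)
  next
    assume h: "\<forall>m. Suc m < length (a#b#r) \<longrightarrow> adj E ((a#b#r)!m) ((a#b#r)!Suc m)"
    have "adj E a b" using h[rule_format, of 0] by simp
    moreover have "adjs E (b#r)" using 1 h[rule_format, of "Suc _"] by auto
    ultimately show "adjs E (a#b#r)" by simp
  qed
qed auto

lemma dconn_iff: "d_connecting E S w \<longleftrightarrow> (\<forall>m. Suc (Suc m) < length w \<longrightarrow> ok3 E S (w!m) (w!Suc m) (w!Suc (Suc m)))"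
proof
  assume h: "d_connecting E S w"
  show "\<forall>m. Suc (Suc m) < length w \<longrightarrow> ok3 E S (w!m) (w!Suc m) (w!Suc (Suc m))"
  proof (intro allI impI)
    fix m assume "Suc (Suc m) < length w"
    then have "collider E w (Suc m) \<longrightarrow> (\<exists>s\<in>S. E\<^sup>*\<^sup>* (w!Suc m) s)"
       "\<not> collider E w (Suc m) \<longrightarrow> w!Suc m \<notin> S"
      using h unfolding d_connecting_def by blast+
    then show "ok3 E S (w!m) (w!Suc m) (w!Suc (Suc m))" unfolding collider_def ok3_def by simp
  qed
next
  assume h: "\<forall>m. Suc (Suc m) < length w \<longrightarrow> ok3 E S (w!m) (w!Suc m) (w!Suc (Suc m))"
  show "d_connecting E S w" unfolding d_connecting_def
  proof (intro allI impI)
    fix m assume m: "0 < m \<and> Suc m < length w"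
    then obtain n where n: "m = Suc n" by (cases m) auto
    have "ok3 E S (w!n) (w!Suc n) (w!Suc (Suc n))" using h m n by blast
    then show "(collider E w m \<longrightarrow> (\<exists>s\<in>S. E\<^sup>*\<^sup>* (w ! m) s)) \<and> (\<not> collider E w m \<longrightarrow> w ! m \<notin> S)"
      unfolding collider_def ok3_def n by simp
  qed
qed

lemma oks_iff: "oks E S w \<longleftrightarrow> (\<forall>m. Suc (Suc m) < length w \<longrightarrow> ok3 E S (w!m) (w!Suc m) (w!Suc (Suc m)))"
proof (induction E S w rule: oks.induct)
  case (1 E S a b c r)
  show ?case
  proof
    assume "oks E S (a#b#c#r)" then show "\<forall>m. Suc (Suc m) < length (a#b#c#r) \<longrightarrow> ok3 E S ((a#b#c#r)!m) ((a#b#c#r)!Suc m) ((a#b#c#r)!Suc (Suc m))"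
      using 1 by (auto simp: less_Suc_eq_0_disj)
  next
    assume h: "\<forall>m. Suc (Suc m) < length (a#b#c#r) \<longrightarrow> ok3 E S ((a#b#c#r)!m) ((a#b#c#r)!Suc m) ((a#b#c#r)!Suc (Suc m))"
    have "ok3 E S a b c" using h[rule_format, of 0] by simp
    moreover have "oks E S (b#c#r)" using 1 h[rule_format, of "Suc _"] by auto
    ultimately show "oks E S (a#b#c#r)" by simp
  qed
qed auto

lemma path_iff: "is_path E w \<and> d_connecting E S w \<longleftrightarrow> distinct w \<and> w \<noteq> [] \<and> adjs E w \<and> oks E S w"
  unfolding is_path_def adjs_iff oks_iff dconn_iff by auto

lemma dconnected_iff: "d_connected E i j S \<longleftrightarrow> (\<exists>w. distinct w \<and> w \<noteq> [] \<and> adjs E w \<and> oks E S w \<and> hd w = i \<and> last w = j)"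
  unfolding d_connected_def using path_iff by metis

lemma adjs_join: "adjs E (xs @ [v]) \<Longrightarrow> adjs E (v # ys) \<Longrightarrow> adjs E (xs @ v # ys)"
  by (induction xs rule: induct_list012) auto

lemma adjs_appD1: "adjs E (xs @ ys) \<Longrightarrow> adjs E xs"
  by (induction xs rule: induct_list012) auto

lemma adjs_Cons: "adjs E (x # ys) \<Longrightarrow> adjs E ys"
  by (cases ys) auto

lemma adjs_appD2: "adjs E (xs @ ys) \<Longrightarrow> adjs E ys"
  by (induction xs) (auto dest: adjs_Cons)

lemma oks_Cons: "oks E S (x # ys) \<Longrightarrow> oks E S ys"
  by (induction ys rule: induct_list012) auto

lemma oks_appD1: "oks E S (xs @ ys) \<Longrightarrow> oks E S xs"
proof (induction xs rule: induct_list012)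
  case (3 x y zs) then show ?case by (cases zs) auto
qed auto

lemma oks_appD2: "oks E S (xs @ ys) \<Longrightarrow> oks E S ys"
  by (induction xs) (auto dest: oks_Cons)

lemma oks_join: "oks E S (xs @ [v]) \<Longrightarrow> oks E S (v # ys) \<Longrightarrow>
   (xs \<noteq> [] \<Longrightarrow> ys \<noteq> [] \<Longrightarrow> ok3 E S (last xs) v (hd ys)) \<Longrightarrow> oks E S (xs @ v # ys)"
proof (induction xs rule: induct_list012)
  case (2 x) then show ?case by (cases ys) auto
next
  case (3 x y zs) then show ?case by (cases zs) auto
qed auto

lemma oks_mid: "oks E S (xs @ v # ys) \<Longrightarrow> xs \<noteq> [] \<Longrightarrow> ys \<noteq> [] \<Longrightarrow> ok3 E S (last xs) v (hd ys)"
proof (induction xs rule: induct_list012)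
  case (2 x) then show ?case by (cases ys) auto
next
  case (3 x y zs) then show ?case by (cases zs) auto
qed auto

lemma oks_mono: "oks E S w \<Longrightarrow> (\<And>a b c. b \<in> set (butlast (tl w)) \<Longrightarrow> ok3 E S a b c \<Longrightarrow> ok3 E T a b c) \<Longrightarrow> oks E T w"
proof (induction E S w rule: oks.induct)
  case (1 E S a b c r)
  have "ok3 E T a b c" using 1 by auto
  moreover have "oks E T (b#c#r)" using 1 by (auto intro!: 1(1))
  ultimately show ?case by simp
qed auto

lemma ok3_sym: "ok3 E S a b c = ok3 E S c b a"
  unfolding ok3_def by blast

lemma adj_sym: "adj E a b = adj E b a" unfolding adj_def by blast

lemma adjs_snoc: "adjs E (xs @ [y]) \<longleftrightarrow> adjs E xs \<and> (xs \<noteq> [] \<longrightarrow> adj E (last xs) y)"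
  by (induction xs rule: induct_list012) auto

lemma oks_snoc: "oks E S (xs @ [y]) \<longleftrightarrow> oks E S xs \<and> (length xs \<ge> 2 \<longrightarrow> ok3 E S (xs ! (length xs - 2)) (last xs) y)"
proof (induction xs rule: induct_list012)
  case (3 x y zs) then show ?case by (cases zs) (auto simp: nth_append)
qed auto

lemma adjs_Cons_iff: "adjs E (x # w) \<longleftrightarrow> adjs E w \<and> (w \<noteq> [] \<longrightarrow> adj E x (w!0))"
  by (cases w) auto

lemma oks_Cons_iff: "oks E S (x # w) \<longleftrightarrow> oks E S w \<and> (length w \<ge> 2 \<longrightarrow> ok3 E S x (w!0) (w!1))"
  by (induction w rule: induct_list012) auto

lemma adjs_rev: "adjs E (rev w) = adjs E w"
proof (induction w)
  case (Cons x w) then show ?case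
    by (auto simp: adjs_snoc adjs_Cons_iff adj_sym last_rev hd_conv_nth)
qed auto

lemma oks_rev: "oks E S (rev w) = oks E S w"
proof (induction w)
  case (Cons x w)
  have h1: "length w \<ge> 2 \<Longrightarrow> rev w ! (length w - 2) = w ! 1"
    by (simp add: rev_nth)
  have h2: "length w \<ge> 2 \<Longrightarrow> last (rev w) = w ! 0" by (cases w) (auto simp: last_rev)
  have "oks E S (rev (x # w)) = oks E S (rev w @ [x])" by simp
  also have "... = (oks E S (rev w) \<and> (length (rev w) \<ge> 2 \<longrightarrow> ok3 E S (rev w ! (length (rev w) - 2)) (last (rev w)) x))"
    by (rule oks_snoc)
  also have "... = (oks E S w \<and> (length w \<ge> 2 \<longrightarrow> ok3 E S x (w!0) (w!1)))"
  proof (cases "length w \<ge> 2")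
    case True then show ?thesis using h1 h2 Cons.IH ok3_sym[of E S x "w!0" "w!1"] by simp
  next
    case False then show ?thesis using Cons.IH by simp
  qed
  also have "... = oks E S (x # w)" by (rule oks_Cons_iff[symmetric])
  finally show ?case .
qed auto

lemma dconn_sym: "d_connected E i j S \<Longrightarrow> d_connected E j i S"
proof -
  assume "d_connected E i j S"
  then obtain w where w: "distinct w" "w \<noteq> []" "adjs E w" "oks E S w" "hd w = i" "last w = j"
    unfolding dconnected_iff by blast
  have "distinct (rev w) \<and> rev w \<noteq> [] \<and> adjs E (rev w) \<and> oks E S (rev w) \<and> hd (rev w) = j \<and> last (rev w) = i"
    using w by (simp add: adjs_rev oks_rev hd_rev last_rev)
  then show ?thesis unfolding dconnected_iff by blast
qed



lemma fwd_chain: "adjs E (b # r) \<Longrightarrow> oks E S (a # b # r) \<Longrightarrow> E a b \<Longrightarrow> \<not> (\<exists>s\<in>S. E\<^sup>*\<^sup>* b s) \<Longrightarrow> E\<^sup>*\<^sup>* b (last (b # r))"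
proof (induction r arbitrary: a b)
  case Nil then show ?case by simp
next
  case (Cons c r)
  have o: "ok3 E S a b c" using Cons.prems by simp
  have nb: "\<not> E c b" using o Cons.prems(3,4) unfolding ok3_def by blast
  have "E b c" using Cons.prems(1) nb by (simp add: adj_def)
  have nc: "\<not> (\<exists>s\<in>S. E\<^sup>*\<^sup>* c s)" using Cons.prems(4) \<open>E b c\<close>
    by (meson converse_rtranclp_into_rtranclp)
  have "E\<^sup>*\<^sup>* c (last (c # r))"
    using Cons.IH[where a=b and b=c] Cons.prems(1,2) \<open>E b c\<close> nc by (auto dest: adjs_Cons)
  then show ?case using \<open>E b c\<close> by (simp add: converse_rtranclp_into_rtranclp)
qed

lemma walk_to_path:
  assumes dag: "\<forall>a. \<not> E\<^sup>+\<^sup>+ a a"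
  shows "w \<noteq> [] \<Longrightarrow> adjs E w \<Longrightarrow> oks E S w \<Longrightarrow>
    \<exists>\<pi>. distinct \<pi> \<and> \<pi> \<noteq> [] \<and> adjs E \<pi> \<and> oks E S \<pi> \<and> hd \<pi> = hd w \<and> last \<pi> = last w"
proof (induction "length w" arbitrary: w rule: less_induct)
  case less
  show ?case
  proof (cases "distinct w")
    case True thus ?thesis using less.prems by blast
  next
    case False
    then obtain xs v mid ys where w: "w = xs @ [v] @ mid @ [v] @ ys" using not_distinct_decomp by blast
    have e1: "w = (xs @ [v]) @ (mid @ v # ys)" using w by simp
    have e2: "w = (xs @ v # mid) @ (v # ys)" using w by simp
    have e3: "w = xs @ ((v # mid @ [v]) @ ys)" using w by simp
    have a1: "adjs E (xs @ [v])" using less.prems(2) e1 adjs_appD1 by metis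
    have a2: "adjs E (v # ys)" using less.prems(2) e2 adjs_appD2 by metis
    have o1: "oks E S (xs @ [v])" using less.prems(3) e1 oks_appD1 by metis
    have o2: "oks E S (v # ys)" using less.prems(3) e2 oks_appD2 by metis
    have am: "adjs E (v # mid @ [v])" using less.prems(2) e3 adjs_appD1 adjs_appD2 by metis
    have om: "oks E S (v # mid @ [v])" using less.prems(3) e3 oks_appD1 oks_appD2 by metis
    have junc: "ok3 E S (last xs) v (hd ys)" if xne: "xs \<noteq> []" and yne: "ys \<noteq> []"
    proof -
      define b where "b = hd (mid @ [v])"
      have t1: "ok3 E S (last xs) v b"
        using oks_mid[of E S xs v "mid @ v # ys"] less.prems(3) w xne unfolding b_def
        by (cases mid) auto
      have t2: "ok3 E S (last (v # mid)) v (hd ys)"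
        using oks_mid[of E S "xs @ v # mid" v ys] less.prems(3) w yne by simp
      show ?thesis
      proof (cases "\<exists>s\<in>S. E\<^sup>*\<^sup>* v s")
        case True
        then show ?thesis using t1 t2 unfolding ok3_def by blast
      next
        case False
        hence vS: "v \<notin> S" by blast
        have "\<not> (E (last xs) v \<and> E (hd ys) v)"
        proof
          assume c: "E (last xs) v \<and> E (hd ys) v"
          have nb: "\<not> E b v" using t1 False c unfolding ok3_def by blast
          have mb: "mid @ [v] = b # tl (mid @ [v])" unfolding b_def by simp
          have "adj E v b" using am mb adjs.simps(1) by metis
          hence "E v b" using nb by (simp add: adj_def)
          have nbS: "\<not> (\<exists>s\<in>S. E\<^sup>*\<^sup>* b s)" using False \<open>E v b\<close>
            by (meson converse_rtranclp_into_rtranclp)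
          have "E\<^sup>*\<^sup>* b (last (b # tl (mid @ [v])))"
            using fwd_chain[of E b "tl (mid @ [v])" S v] am om mb \<open>E v b\<close> nbS
            by (metis adjs_Cons)
          hence "E\<^sup>*\<^sup>* b v" using mb by (metis last_snoc)
          hence "E\<^sup>+\<^sup>+ v v" using \<open>E v b\<close> by (meson rtranclp_into_tranclp2)
          then show False using dag by blast
        qed
        then show ?thesis using vS unfolding ok3_def by blast
      qed
    qed
    let ?w' = "xs @ v # ys"
    have "adjs E ?w'" using a1 a2 adjs_join by blast
    moreover have "oks E S ?w'" using o1 o2 junc oks_join by blast
    moreover have "length ?w' < length w" using w by simp
    ultimately obtain \<pi> where p: "distinct \<pi> \<and> \<pi> \<noteq> [] \<and> adjs E \<pi> \<and> oks E S \<pi> \<and> hd \<pi> = hd ?w' \<and> last \<pi> = last ?w'"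
      using less.hyps by blast
    have "hd ?w' = hd w" using w by (cases xs) auto
    moreover have "last ?w' = last w" using w by (cases ys rule: rev_cases) auto
    ultimately show ?thesis using p by metis
  qed
qed


fun echain :: "(nat \<Rightarrow> nat \<Rightarrow> bool) \<Rightarrow> nat list \<Rightarrow> bool" where
  "echain E (a#b#r) = (E a b \<and> echain E (b#r))" | "echain E _ = True"

lemma dpath: "E\<^sup>*\<^sup>* b j \<Longrightarrow> \<exists>ds. ds \<noteq> [] \<and> hd ds = b \<and> last ds = j \<and> echain E ds \<and> (\<forall>x\<in>set ds. E\<^sup>*\<^sup>* b x)"
proof (induction rule: converse_rtranclp_induct)
  case base
  then show ?case by (rule exI[of _ "[j]"]) simp
next
  case (step a b)
  then obtain ds where ds: "ds \<noteq> [] \<and> hd ds = b \<and> last ds = j \<and> echain E ds \<and> (\<forall>x\<in>set ds. E\<^sup>*\<^sup>* b x)" by blast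
  then obtain r where r: "ds = b # r" by (cases ds) auto
  show ?case
    apply (rule exI[of _ "a # ds"])
    using ds r step(1) by (auto intro: converse_rtranclp_into_rtranclp)
qed

lemma echain_good: "\<forall>a b. E a b \<longrightarrow> \<not> E b a \<Longrightarrow> echain E ds \<Longrightarrow> \<forall>x\<in>set ds. x \<notin> C \<Longrightarrow> adjs E ds \<and> oks E C ds"
proof (induction ds rule: induct_list012)
  case (3 x y zs) then show ?case
    by (cases zs) (auto simp: adj_def ok3_def)
qed (auto simp: adj_def)

lemma last_butlast_nth: "length u \<ge> 2 \<Longrightarrow> last (butlast u) = u ! (length u - 2)"
proof -
  assume l: "length u \<ge> 2"
  hence ne: "butlast u \<noteq> []" by (cases u) auto
  have "last (butlast u) = butlast u ! (length (butlast u) - 1)" using ne by (rule last_conv_nth)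
  also have "... = u ! (length u - 2)" using l by (simp add: nth_butlast numeral_2_eq_2)
  finally show ?thesis .
qed

lemma lemA:
  assumes dag: "\<forall>a. \<not> E\<^sup>+\<^sup>+ a a"
  shows "adjs E w \<Longrightarrow> oks E (insert j C) w \<Longrightarrow> w \<noteq> [] \<Longrightarrow>
    (\<exists>w'. w' \<noteq> [] \<and> adjs E w' \<and> oks E C w' \<and> hd w' = hd w \<and> last w' = j) \<or> oks E C w"
proof (induction w rule: rev_induct)
  case Nil then show ?case by simp
next
  case (snoc x u)
  show ?case
  proof (cases "u = []")
    case True then show ?thesis by simp
  next
    case False
    have au: "adjs E u" using snoc.prems adjs_appD1 by blast
    have ou: "oks E (insert j C) u" using snoc.prems oks_appD1 by blast
    have hu: "hd (u @ [x]) = hd u" using False by simp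
    from snoc.IH[OF au ou False] show ?thesis
    proof
      assume "\<exists>w'. w' \<noteq> [] \<and> adjs E w' \<and> oks E C w' \<and> hd w' = hd u \<and> last w' = j"
      then show ?thesis using hu by auto
    next
      assume ocu: "oks E C u"
      show ?thesis
      proof (cases "length u \<ge> 2 \<longrightarrow> ok3 E C (u ! (length u - 2)) (last u) x")
        case True then show ?thesis using ocu by (simp add: oks_snoc)
      next
        case False
        hence len: "length u \<ge> 2" and nok: "\<not> ok3 E C (u ! (length u - 2)) (last u) x" by auto
        define a where "a = u ! (length u - 2)"
        define b where "b = last u"
        have okj: "ok3 E (insert j C) a b x"
        proof -
          have "oks E (insert j C) u \<and> (length u \<ge> 2 \<longrightarrow> ok3 E (insert j C) (u ! (length u - 2)) (last u) x)"
            using snoc.prems(2) oks_snoc by blast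
          then show ?thesis using len unfolding a_def b_def by blast
        qed
        have nok': "\<not> ok3 E C a b x" using nok unfolding a_def b_def .
        have c1: "E a b \<and> E x b"
        proof (rule ccontr)
          assume nc: "\<not> (E a b \<and> E x b)"
          then have "b \<notin> insert j C" using okj unfolding ok3_def by blast
          then have "ok3 E C a b x" using nc unfolding ok3_def by blast
          then show False using nok' by blast
        qed
        have col: "E a b" using c1 by blast
        have nD: "\<not> (\<exists>s\<in>C. E\<^sup>*\<^sup>* b s)"
        proof
          assume "\<exists>s\<in>C. E\<^sup>*\<^sup>* b s"
          then have "ok3 E C a b x" using c1 unfolding ok3_def by blast
          then show False using nok' by blast
        qed
        have "\<exists>s\<in>insert j C. E\<^sup>*\<^sup>* b s" using okj c1 unfolding ok3_def by blast
        then have bj: "E\<^sup>*\<^sup>* b j" using nD by blast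
        obtain ds where ds: "ds \<noteq> [] \<and> hd ds = b \<and> last ds = j \<and> echain E ds \<and> (\<forall>x\<in>set ds. E\<^sup>*\<^sup>* b x)"
          using dpath[OF bj] by blast
        then obtain r where r: "ds = b # r" by (cases ds) auto
        have asym: "\<forall>a b. E a b \<longrightarrow> \<not> E b a"
        proof (intro allI impI notI)
          fix a b assume "E a b" "E b a"
          then have "E\<^sup>+\<^sup>+ a a" by (rule tranclp.trancl_into_trancl[OF tranclp.r_into_trancl])
          then show False using dag by blast
        qed
        have notC: "\<forall>x\<in>set ds. x \<notin> C" using ds nD by blast
        have gds: "adjs E ds \<and> oks E C ds" using echain_good[OF asym] ds notC by blast
        have bC: "b \<notin> C" using nD by blast
        have ue: "u = butlast u @ [b]" unfolding b_def using \<open>u \<noteq> []\<close> by (rule append_butlast_last_id[symmetric])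
        have ech: "echain E (b # r)" using ds r by simp
        have junc: "ok3 E C (last (butlast u)) b (hd r)" if "butlast u \<noteq> []" "r \<noteq> []"
        proof -
          have "E b (hd r)" using ech \<open>r \<noteq> []\<close> by (metis echain.simps(1) list.exhaust_sel)
          hence "\<not> E (hd r) b" using asym by blast
          then show ?thesis using bC unfolding ok3_def by blast
        qed
        have ub: "oks E C (butlast u @ [b])" by (subst ue[symmetric]) (rule ocu)
        have gb: "oks E C (b # r)" "adjs E (b # r)" using gds r by auto
        have w'1: "oks E C (butlast u @ b # r)"
          by (rule oks_join[OF ub gb(1) junc])
        have aub: "adjs E (butlast u @ [b])" by (subst ue[symmetric]) (rule au)
        have w'2: "adjs E (butlast u @ b # r)"
          by (rule adjs_join[OF aub gb(2)])
        have "hd (butlast u @ b # r) = hd (butlast u @ [b])" by (cases "butlast u") simp_all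
        also have "... = hd u" using ue by (rule arg_cong[of _ _ hd, symmetric])
        finally have h1: "hd (butlast u @ b # r) = hd u" .
        have "last (butlast u @ b # r) = last (b # r)" by simp
        also have "... = j" using ds r by simp
        finally have h2: "last (butlast u @ b # r) = j" .
        have h3: "butlast u @ b # r \<noteq> []" by simp
        have h4: "hd (butlast u @ b # r) = hd (u @ [x])" using h1 hu by (rule trans[OF _ sym])
        have "butlast u @ b # r \<noteq> [] \<and> adjs E (butlast u @ b # r) \<and> oks E C (butlast u @ b # r) \<and> hd (butlast u @ b # r) = hd (u @ [x]) \<and> last (butlast u @ b # r) = j"
          using h3 w'2 w'1 h4 h2 by (intro conjI)
        then show ?thesis by (rule disjI1[OF exI])
      qed
    qed
  qed
qed

lemma interior: "distinct w \<Longrightarrow> b \<in> set (butlast (tl w)) \<Longrightarrow> b \<in> set w \<and> b \<noteq> hd w \<and> b \<noteq> last w"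
proof (cases w)
  case (Cons a r)
  assume d: "distinct w" and b: "b \<in> set (butlast (tl w))"
  have br: "b \<in> set (butlast r)" using b Cons by simp
  hence "r \<noteq> []" by auto
  hence "r = butlast r @ [last r]" by simp
  hence "last r \<notin> set (butlast r)" using d Cons by (metis distinct.simps(2) distinct_append disjoint_iff list.set_intros(1))
  then show ?thesis using br d Cons \<open>r \<noteq> []\<close> by (auto dest: in_set_butlastD)
qed simp

lemma ok3_ins: "b \<noteq> k \<Longrightarrow> ok3 E C a b c \<Longrightarrow> ok3 E (insert k C) a b c"
  unfolding ok3_def by blast


lemma partA:
  assumes c: "d_connected E i j C" and nc: "\<not> d_connected E i j (insert k C)"
    and ij: "i \<noteq> j" and ik: "i \<noteq> k" and jk: "j \<noteq> k"
  shows "d_connected E i k (insert j C) \<and> d_connected E k j (insert i C)"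
proof -
  obtain P where P: "distinct P" "P \<noteq> []" "adjs E P" "oks E C P" "hd P = i" "last P = j"
    using c unfolding dconnected_iff by blast
  have kin: "k \<in> set (butlast (tl P))"
  proof (rule ccontr)
    assume nk: "k \<notin> set (butlast (tl P))"
    have "oks E (insert k C) P"
      using P(4)
    proof (rule oks_mono)
      fix a b c assume "b \<in> set (butlast (tl P))" "ok3 E C a b c"
      moreover then have "b \<noteq> k" using nk by blast
      ultimately show "ok3 E (insert k C) a b c" using ok3_ins by blast
    qed
    then have "d_connected E i j (insert k C)" using P unfolding dconnected_iff by blast
    then show False using nc by blast
  qed
  have "k \<in> set P" using interior[OF P(1) kin] by blast
  from split_list[OF this] obtain xs ys where Pe: "P = xs @ k # ys" by blast
  have xne: "xs \<noteq> []"
  proof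
    assume "xs = []" then have "hd P = k" unfolding Pe by simp
    with P(5) ik show False by simp
  qed
  have yne: "ys \<noteq> []"
  proof
    assume "ys = []" then have "last P = k" unfolding Pe by simp
    with P(6) jk show False by simp
  qed
  have dxy: "set xs \<inter> set (k # ys) = {}" using P(1) unfolding Pe by simp
  have "hd P = hd xs" using xne unfolding Pe by simp
  then have iin: "i \<in> set xs" using P(5) xne by simp
  have "last P = last ys" using yne unfolding Pe by simp
  then have jin: "j \<in> set ys" using P(6) yne by simp
  have P1: "P = (xs @ [k]) @ ys" using Pe by simp
  have "distinct ((xs @ [k]) @ ys)" using P(1) P1 by simp
  then have d1: "distinct (xs @ [k])" by (rule distinct_append[THEN iffD1, THEN conjunct1])
  have o1: "oks E (insert j C) (xs @ [k])"
  proof (rule oks_mono)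
    show "oks E C (xs @ [k])" using P(4) unfolding P1 by (rule oks_appD1)
  next
    fix a b c assume b: "b \<in> set (butlast (tl (xs @ [k])))" and o: "ok3 E C a b c"
    have "b \<in> set (xs @ [k]) \<and> b \<noteq> last (xs @ [k])" using interior[OF d1 b] by blast
    then have "b \<in> set xs" by auto
    then have "b \<noteq> j" using dxy jin by auto
    then show "ok3 E (insert j C) a b c" using o ok3_ins by blast
  qed
  have r1: "d_connected E i k (insert j C)"
    unfolding dconnected_iff
  proof (rule exI[of _ "xs @ [k]"], intro conjI)
    show "adjs E (xs @ [k])" using P(3) unfolding P1 by (rule adjs_appD1)
    show "hd (xs @ [k]) = i" using P(5) xne unfolding Pe by simp
  qed (use d1 o1 in simp_all)
  have d2: "distinct (k # ys)" using P(1) Pe by simp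
  have o2: "oks E (insert i C) (k # ys)"
  proof (rule oks_mono)
    show "oks E C (k # ys)" using P(4) unfolding Pe by (rule oks_appD2)
  next
    fix a b c assume b: "b \<in> set (butlast (tl (k # ys)))" and o: "ok3 E C a b c"
    have "b \<in> set (k # ys) \<and> b \<noteq> hd (k # ys)" using interior[OF d2 b] by blast
    then have "b \<in> set ys" by auto
    then have "b \<noteq> i" using dxy iin by auto
    then show "ok3 E (insert i C) a b c" using o ok3_ins by blast
  qed
  have r2: "d_connected E k j (insert i C)"
    unfolding dconnected_iff
  proof (rule exI[of _ "k # ys"], intro conjI)
    show "adjs E (k # ys)" using P(3) unfolding Pe by (rule adjs_appD2)
    show "last (k # ys) = j" using P(6) yne unfolding Pe by simp
  qed (use d2 o2 in simp_all)
  show ?thesis using r1 r2 by blast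
qed

lemma partB:
  assumes dag: "\<forall>a. \<not> E\<^sup>+\<^sup>+ a a"
    and c1: "d_connected E i k (insert j C)" and c2: "d_connected E j k (insert i C)"
    and nc: "\<not> d_connected E i j (insert k C)"
    and ij: "i \<noteq> j" and ik: "i \<noteq> k" and jk: "j \<noteq> k" and kC: "k \<notin> C"
  shows "d_connected E i j C"
proof (rule ccontr)
  assume ncC: "\<not> d_connected E i j C"
  have walk: "d_connected E (hd w) (last w) T" if "w \<noteq> []" "adjs E w" "oks E T w" for w T
    using walk_to_path[OF dag that] unfolding dconnected_iff by blast
  obtain P1 where P1: "distinct P1" "P1 \<noteq> []" "adjs E P1" "oks E (insert j C) P1" "hd P1 = i" "last P1 = k"
    using c1 unfolding dconnected_iff by blast
  have oP1: "oks E C P1"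
  proof -
    from lemA[OF dag P1(3) P1(4) P1(2)] show ?thesis
    proof
      assume "\<exists>w'. w' \<noteq> [] \<and> adjs E w' \<and> oks E C w' \<and> hd w' = hd P1 \<and> last w' = j"
      then obtain w' where w': "w' \<noteq> []" "adjs E w'" "oks E C w'" "hd w' = hd P1" "last w' = j" by blast
      have "d_connected E (hd w') (last w') C" by (rule walk[OF w'(1-3)])
      then have "d_connected E i j C" using w'(4,5) P1(5) by simp
      with ncC show ?thesis by blast
    qed
  qed
  obtain P2 where P2: "distinct P2" "P2 \<noteq> []" "adjs E P2" "oks E (insert i C) P2" "hd P2 = j" "last P2 = k"
    using c2 unfolding dconnected_iff by blast
  have oP2: "oks E C P2"
  proof -
    from lemA[OF dag P2(3) P2(4) P2(2)] show ?thesis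
    proof
      assume "\<exists>w'. w' \<noteq> [] \<and> adjs E w' \<and> oks E C w' \<and> hd w' = hd P2 \<and> last w' = i"
      then obtain w' where w': "w' \<noteq> []" "adjs E w'" "oks E C w'" "hd w' = hd P2" "last w' = i" by blast
      have "d_connected E (hd w') (last w') C" by (rule walk[OF w'(1-3)])
      then have "d_connected E j i C" using w'(4,5) P2(5) by simp
      then have "d_connected E i j C" by (rule dconn_sym)
      with ncC show ?thesis by blast
    qed
  qed
  define Q where "Q = rev P2"
  have Q: "distinct Q" "Q \<noteq> []" "adjs E Q" "oks E C Q" "hd Q = k" "last Q = j"
    using P2 oP2 unfolding Q_def by (auto simp: adjs_rev oks_rev hd_rev last_rev)
  have e1: "P1 = butlast P1 @ [k]" using P1(2) unfolding P1(6)[symmetric] by (rule append_butlast_last_id[symmetric])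
  have e2: "Q = k # tl Q" using Q(2) unfolding Q(5)[symmetric] by (rule list.collapse[symmetric])
  have b1: "butlast P1 \<noteq> []"
  proof
    assume "butlast P1 = []" then have "P1 = [k]" using e1 by simp
    then show False using P1(5) ik by simp
  qed
  have b2: "tl Q \<noteq> []"
  proof
    assume "tl Q = []" then have "Q = [k]" using e2 by simp
    then show False using Q(6) jk by simp
  qed
  define W where "W = butlast P1 @ k # tl Q"
  have aW: "adjs E W" unfolding W_def
  proof (rule adjs_join)
    show "adjs E (butlast P1 @ [k])" using P1(3) e1 by simp
    show "adjs E (k # tl Q)" using Q(3) e2 by simp
  qed
  have "hd W = hd (butlast P1)" unfolding W_def using b1 by simp
  also have "... = hd P1" using b1 arg_cong[OF e1, of hd] by simp
  finally have hW: "hd W = i" using P1(5) by simp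
  have "last W = last (tl Q)" unfolding W_def using b2 by simp
  also have "... = last Q" using b2 by (simp add: last_tl)
  finally have lW: "last W = j" using Q(6) by simp
  have Wne: "W \<noteq> []" unfolding W_def by simp
  show False
  proof (cases "ok3 E C (last (butlast P1)) k (hd (tl Q))")
    case True
    have "oks E C W" unfolding W_def
    proof (rule oks_join)
      show "oks E C (butlast P1 @ [k])" using oP1 e1 by simp
      show "oks E C (k # tl Q)" using Q(4) e2 by simp
    qed (rule True)
    then have "d_connected E (hd W) (last W) C" by (rule walk[OF Wne aW])
    then show False using hW lW ncC by simp
  next
    case False
    hence col: "E (last (butlast P1)) k \<and> E (hd (tl Q)) k" using kC unfolding ok3_def by blast
    have jn: "ok3 E (insert k C) (last (butlast P1)) k (hd (tl Q))"
      using col unfolding ok3_def by blast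
    have o1: "oks E (insert k C) P1"
    proof (rule oks_mono)
      show "oks E C P1" by (rule oP1)
    next
      fix a b c assume b: "b \<in> set (butlast (tl P1))" and o: "ok3 E C a b c"
      have "b \<noteq> k" using interior[OF P1(1) b] P1(6) by blast
      then show "ok3 E (insert k C) a b c" using o ok3_ins by blast
    qed
    have o2: "oks E (insert k C) Q"
    proof (rule oks_mono)
      show "oks E C Q" by (rule Q(4))
    next
      fix a b c assume b: "b \<in> set (butlast (tl Q))" and o: "ok3 E C a b c"
      have "b \<noteq> k" using interior[OF Q(1) b] Q(5) by blast
      then show "ok3 E (insert k C) a b c" using o ok3_ins by blast
    qed
    have "oks E (insert k C) W" unfolding W_def
    proof (rule oks_join)
      show "oks E (insert k C) (butlast P1 @ [k])" using o1 e1 by simp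
      show "oks E (insert k C) (k # tl Q)" using o2 e2 by simp
    qed (rule jn)
    then have "d_connected E (hd W) (last W) (insert k C)" by (rule walk[OF Wne aW])
    then show False using hW lW nc by simp
  qed
qed


lemma mem_moral: "{a, b} \<in> moral_subgraph E W \<longleftrightarrow> a \<noteq> b \<and> a \<in> W \<and> b \<in> W \<and> d_connected E a b (W - {a, b})"
proof
  assume "{a, b} \<in> moral_subgraph E W"
  then obtain i j where h: "{a, b} = {i, j}" "i \<noteq> j" "i \<in> W" "j \<in> W" "d_connected E i j (W - {i, j})"
    unfolding moral_subgraph_def d_separated_def by blast
  from h(1) have "(a = i \<and> b = j) \<or> (a = j \<and> b = i)" by (auto simp: doubleton_eq_iff)
  then show "a \<noteq> b \<and> a \<in> W \<and> b \<in> W \<and> d_connected E a b (W - {a, b})"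
    using h dconn_sym by (auto simp: insert_commute)
next
  assume "a \<noteq> b \<and> a \<in> W \<and> b \<in> W \<and> d_connected E a b (W - {a, b})"
  then show "{a, b} \<in> moral_subgraph E W" unfolding moral_subgraph_def d_separated_def by blast
qed

theorem proposition1:
  fixes p :: nat and E :: "nat \<Rightarrow> nat \<Rightarrow> bool" and V :: "nat set" and k :: nat
  assumes "dag p E" and "V \<subseteq> {1..p}" and "k \<in> V"
  shows "fill_edges E V k =
    {{i, j} | i j. i \<noteq> j \<and> i \<in> nbr (moral_subgraph E V) k \<and> j \<in> nbr (moral_subgraph E V) k
                 \<and> \<not> uadj (moral_subgraph E V) i j}"
proof -
  have dag: "\<forall>a. \<not> E\<^sup>+\<^sup>+ a a" using assms(1) unfolding dag_def by blast
  let ?M = "moral_subgraph E V"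
  have sets: "V - {k} - {i, j} = V - {i, j, k} \<and> V - {i, j} = insert k (V - {i, j, k}) \<and>
     V - {i, k} = insert j (V - {i, j, k}) \<and> V - {k, j} = insert i (V - {i, j, k}) \<and> V - {j, k} = insert i (V - {i, j, k})"
    if "i \<in> V" "j \<in> V" "i \<noteq> j" "i \<noteq> k" "j \<noteq> k" for i j
    using that assms(3) by blast
  have nbrI: "x \<in> nbr ?M k" if "x \<noteq> k" "{x, k} \<in> ?M" for x
    using that unfolding nbr_def by simp
  have nbrD: "x \<noteq> k \<and> x \<in> V \<and> d_connected E x k (V - {x, k})" if "x \<in> nbr ?M k" for x
  proof -
    have "x \<noteq> k" "{x, k} \<in> ?M" using that unfolding nbr_def by simp_all
    then show ?thesis using mem_moral[of x k E V] by blast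
  qed
  show ?thesis
  proof (rule set_eqI, rule iffI)
    fix e assume "e \<in> fill_edges E V k"
    then have e1: "e \<in> moral_subgraph E (V - {k})" and e2: "e \<notin> induced ?M (V - {k})"
      unfolding fill_edges_def by auto
    from e1 obtain i j where ij: "e = {i, j}" and h: "i \<noteq> j" "i \<in> V - {k}" "j \<in> V - {k}"
       "d_connected E i j (V - {k} - {i, j})"
      unfolding moral_subgraph_def d_separated_def by blast
    have "e \<subseteq> V - {k}" using ij h by blast
    hence eM: "e \<notin> ?M" using e2 unfolding induced_def by blast
    have ik: "i \<noteq> k" "j \<noteq> k" "i \<in> V" "j \<in> V" using h by auto
    have nM: "\<not> d_connected E i j (V - {i, j})"
    proof
      assume "d_connected E i j (V - {i, j})"
      then have "{i, j} \<in> ?M" using mem_moral[of i j E V] h(1) ik by blast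
      then show False using eM ij by simp
    qed
    note S = sets[OF ik(3,4) h(1) ik(1,2)]
    have A: "d_connected E i k (insert j (V - {i, j, k})) \<and> d_connected E k j (insert i (V - {i, j, k}))"
    proof (rule partA)
      show "d_connected E i j (V - {i, j, k})" using h(4) S by simp
      show "\<not> d_connected E i j (insert k (V - {i, j, k}))" using nM S by simp
    qed (use h ik in auto)
    have "{i, k} \<in> ?M" using mem_moral[of i k E V] A S ik assms(3) by simp
    hence ni: "i \<in> nbr ?M k" using nbrI ik by blast
    have "{k, j} \<in> ?M" using mem_moral[of k j E V] A S ik assms(3) by simp
    hence "{j, k} \<in> ?M" by (simp add: insert_commute)
    hence nj: "j \<in> nbr ?M k" using nbrI ik by blast
    have nu: "\<not> uadj ?M i j" unfolding uadj_def using eM ij by simp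
    show "e \<in> {{i, j} | i j. i \<noteq> j \<and> i \<in> nbr ?M k \<and> j \<in> nbr ?M k \<and> \<not> uadj ?M i j}"
      using ij h(1) ni nj nu by blast
  next
    fix e assume "e \<in> {{i, j} | i j. i \<noteq> j \<and> i \<in> nbr ?M k \<and> j \<in> nbr ?M k \<and> \<not> uadj ?M i j}"
    then obtain i j where ij: "e = {i, j}" "i \<noteq> j" "i \<in> nbr ?M k" "j \<in> nbr ?M k" "\<not> uadj ?M i j"
      by blast
    have hi: "i \<noteq> k \<and> i \<in> V \<and> d_connected E i k (V - {i, k})" by (rule nbrD[OF ij(3)])
    have hj: "j \<noteq> k \<and> j \<in> V \<and> d_connected E j k (V - {j, k})" by (rule nbrD[OF ij(4)])
    note S = sets[of i j, OF _ _ ij(2)] 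
    have S': "V - {k} - {i, j} = V - {i, j, k}" "V - {i, j} = insert k (V - {i, j, k})"
      "V - {i, k} = insert j (V - {i, j, k})" "V - {j, k} = insert i (V - {i, j, k})"
      using S hi hj by blast+
    have nM: "\<not> d_connected E i j (V - {i, j})"
    proof
      assume "d_connected E i j (V - {i, j})"
      then have "{i, j} \<in> ?M" using mem_moral[of i j E V] ij(2) hi hj by blast
      then show False using ij(5) unfolding uadj_def by simp
    qed
    have "d_connected E i j (V - {i, j, k})"
    proof (rule partB[OF dag])
      show "d_connected E i k (insert j (V - {i, j, k}))" using hi S'(3) by simp
      show "d_connected E j k (insert i (V - {i, j, k}))" using hj S'(4) by simp
      show "\<not> d_connected E i j (insert k (V - {i, j, k}))" using nM S'(2) by simp
    qed (use hi hj ij(2) in auto)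
    hence "d_connected E i j (V - {k} - {i, j})" using S'(1) by simp
    hence "{i, j} \<in> moral_subgraph E (V - {k})" using mem_moral[of i j E "V - {k}"] ij(2) hi hj by blast
    hence e1: "e \<in> moral_subgraph E (V - {k})" using ij(1) by simp
    have e2: "e \<notin> induced ?M (V - {k})" using ij(1,5) unfolding induced_def uadj_def by simp
    show "e \<in> fill_edges E V k" using e1 e2 unfolding fill_edges_def by blast
  qed
qed

end
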